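(* For all $f\in\mathbb{F}_2[x]\setminus\{0\}$ it holds that $\tau(f)\le 2\deg(f)^{1.5}+1$.
   Context: Define $T:\mathbb{F}_2[x]\to\mathbb{F}_2[x]$ by $T(f)=\frac{f}{x+1}$ if $f(1)=0$ and $T(f)=\frac{xf+1}{x+1}$ if $f(1)=1$. For nonzero $f$, $\tau(f)$ is the least $k\in\mathbb{N}$ with $T^k(f)=1$. *)

theory Defs
  imports "HOL-Computational_Algebra.Polynomial" "HOL-Library.Z2" Complex_Main
begin

text \<open>Polynomials over F_2 are modelled as bit poly (bit is the two-element field).\<close>

definition T_map :: "bit poly \<Rightarrow> bit poly" where
  "T_map f = (if poly f 1 = 0 then f div [:1, 1:]
              else ([:0, 1:] * f + 1) div [:1, 1:])"

definition tau :: "bit poly \<Rightarrow> nat" where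
  "tau f = (LEAST k. (T_map ^^ k) f = 1)"

end

theory Submission
  imports Defs
begin


lemma bit_add_self [simp]: "(x::bit) + x = 0"
  by (cases x) simp_all

lemma bitpoly_add_self [simp]: "(p::bit poly) + p = 0"
  by (rule poly_eqI) (simp only: coeff_add bit_add_self coeff_0)



lemma coeff_X_mult: "coeff ([:0,1:] * q) n = (case n of 0 \<Rightarrow> 0 | Suc m \<Rightarrow> coeff q m)"
  for q :: "'a::comm_ring_1 poly"
  by (simp add: coeff_pCons)

lemma X_decomp: "p = [:coeff p 0:] + [:0,1:] * poly_shift 1 p"
  for p :: "'a::comm_ring_1 poly"
  by (rule poly_eqI) (auto simp: coeff_pCons coeff_poly_shift split: nat.split)

lemma divX: "p div [:0,1:] = poly_shift 1 p"
  for p :: "'a::field poly"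
proof -
  have "p div [:0,1:] = ([:coeff p 0:] + [:0,1:] * poly_shift 1 p) div [:0,1:]"
    using X_decomp[of p] by simp
  also have "\<dots> = poly_shift 1 p + [:coeff p 0:] div [:0,1:]"
    by (rule div_mult_self2) simp
  also have "[:coeff p 0:] div [:0,1:] = 0"
    by (rule div_poly_less) simp
  finally show ?thesis by simp
qed

lemma shift_X_mult: "poly_shift 1 ([:0,1:] * q) = q" for q :: "'a::comm_ring_1 poly"
  by (rule poly_eqI) (simp add: coeff_poly_shift coeff_pCons)

lemma shift_pCons [simp]: "poly_shift (Suc 0) (pCons a q) = q"
  by (rule poly_eqI) (simp add: coeff_poly_shift)

definition Gm :: "bit poly \<Rightarrow> bit poly" where
  "Gm h = poly_shift 1 ([:1,1:] * h)"

lemma coeff_11_mult: "coeff ([:1,1:] * h) (Suc i) = coeff h (Suc i) + coeff h i"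
  for h :: "'a::comm_ring_1 poly"
  by (simp add: coeff_pCons)

lemma coeff_Gm: "coeff (Gm h) i = coeff h i + coeff h (Suc i)"
proof -
  have "coeff (Gm h) i = coeff ([:1,1:] * h) (Suc i)" unfolding Gm_def
    by (simp only: coeff_poly_shift Suc_eq_plus1)
  also have "\<dots> = coeff h (Suc i) + coeff h i" by (rule coeff_11_mult)
  finally show ?thesis by (simp only: add.commute)
qed

definition Tp :: "bit poly \<Rightarrow> bit poly" where
  "Tp h = (if coeff h 0 = 0 then poly_shift 1 h else Gm h)"

definition sg :: "bit poly \<Rightarrow> bit poly" where
  "sg f = f \<circ>\<^sub>p [:1,1:]"

lemma sg_sg: "sg (sg f) = f"
proof -
  have "[:1,1:] \<circ>\<^sub>p [:1,1:] = ([:0,1:] :: bit poly)"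
    by (simp add: pcompose_pCons one_pCons)
  thus ?thesis unfolding sg_def by (simp add: pcompose_assoc[symmetric] pcompose_idR)
qed

lemma sg_inj: "sg a = sg b \<Longrightarrow> a = b"
  by (metis sg_sg)

lemma sg_1 [simp]: "sg 1 = 1"
  unfolding sg_def by (simp add: pcompose_1)

lemma degree_sg [simp]: "degree (sg f) = degree f"
  unfolding sg_def by (simp add: degree_pcompose)

lemma coeff0_sg: "coeff (sg f) 0 = poly f 1"
  unfolding sg_def by (simp add: poly_0_coeff_0[symmetric] poly_pcompose)

lemma sg_mult: "sg (p * q) = sg p * sg q"
  unfolding sg_def by (simp add: pcompose_mult)

lemma sg_add: "sg (p + q) = sg p + sg q"
  unfolding sg_def by (simp add: pcompose_add)

lemma sg_11 [simp]: "sg [:1,1:] = [:0,1:]"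
  unfolding sg_def by (simp add: pcompose_pCons one_pCons)

lemma sg_X [simp]: "sg [:0,1:] = [:1,1:]"
  unfolding sg_def by (simp add: pcompose_pCons)

lemma dvd11: "poly (p::bit poly) 1 = 0 \<Longrightarrow> [:1,1:] dvd p"
  using poly_eq_0_iff_dvd[of p 1] by simp

lemma sg_T: "sg (T_map f) = Tp (sg f)"
proof (cases "poly f 1 = 0")
  case True
  then obtain q where q: "f = [:1,1:] * q" using dvd11 by blast
  have "T_map f = f div [:1,1:]" unfolding T_map_def using True by simp
  also have "\<dots> = q" unfolding q by (rule nonzero_mult_div_cancel_left) simp
  finally have "T_map f = q" .
  moreover have "sg f = [:0,1:] * sg q" by (simp only: q sg_mult sg_11)
  moreover have "coeff (sg f) 0 = 0" using True by (simp add: coeff0_sg)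
  ultimately show ?thesis unfolding Tp_def by (simp add: shift_X_mult)
next
  case False
  hence f1: "poly f 1 = 1" by simp
  have "poly ([:0,1:] * f + 1) 1 = 0" using f1 by simp
  then obtain q where q: "[:0,1:] * f + 1 = [:1,1:] * q" using dvd11 by blast
  have "T_map f = ([:0,1:] * f + 1) div [:1,1:]" unfolding T_map_def using False by simp
  also have "\<dots> = q" unfolding q by (rule nonzero_mult_div_cancel_left) simp
  finally have "T_map f = q" .
  moreover have e: "[:1,1:] * sg f + 1 = [:0,1:] * sg q"
  proof -
    have "sg ([:0,1:] * f + 1) = sg ([:1,1:] * q)" by (simp only: q)
    thus ?thesis by (simp only: sg_add sg_mult sg_X sg_11 sg_1)
  qed
  moreover have "coeff (sg f) 0 = 1" using f1 by (simp add: coeff0_sg)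
  moreover have "Gm (sg f) = sg q"
  proof (rule poly_eqI)
    fix i
    have "coeff ([:1,1:] * sg f + 1) (Suc i) = coeff ([:0,1:] * sg q) (Suc i)" using e by simp
    thus "coeff (Gm (sg f)) i = coeff (sg q) i"
      unfolding Gm_def by (simp add: coeff_poly_shift coeff_pCons)
  qed
  ultimately show ?thesis unfolding Tp_def by simp
qed

lemma sg_funpow: "sg ((T_map ^^ k) f) = (Tp ^^ k) (sg f)"
  by (induction k) (simp_all add: sg_T)

lemma T_iff: "(T_map ^^ k) f = 1 \<longleftrightarrow> (Tp ^^ k) (sg f) = 1"
  by (metis sg_funpow sg_1 sg_inj)

definition phi :: "bit poly \<Rightarrow> nat \<Rightarrow> nat \<Rightarrow> bit" where
  "phi g e c = coeff ((Gm ^^ c) g) e"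

lemma phi_rec: "phi g e (Suc c) = phi g e c + phi g (Suc e) c"
  unfolding phi_def by (simp add: coeff_Gm)

lemma bit_eq_add: "(x::bit) = y + z \<Longrightarrow> z = y + x"
  by (cases x; cases y; cases z) simp_all

lemma phi_rec2: "phi g (Suc e) c = phi g e c + phi g e (Suc c)"
  by (rule bit_eq_add) (rule phi_rec)

lemma Gm_high: "degree g < j \<Longrightarrow> coeff ((Gm ^^ c) g) j = 0"
  by (induction c arbitrary: j) (simp_all add: coeff_Gm coeff_eq_0)

lemma Gm_top: "coeff ((Gm ^^ c) g) (degree g) = coeff g (degree g)"
proof (induction c)
  case 0
  thus ?case by simp
next
  case (Suc c)
  have "coeff ((Gm ^^ Suc c) g) (degree g)
      = coeff ((Gm ^^ c) g) (degree g) + coeff ((Gm ^^ c) g) (Suc (degree g))"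
    by (simp only: funpow.simps comp_apply coeff_Gm)
  also have "coeff ((Gm ^^ c) g) (Suc (degree g)) = 0" by (rule Gm_high) simp
  finally show ?case using Suc.IH by (simp only: add_0_right)
qed

lemma lc1: "(g::bit poly) \<noteq> 0 \<Longrightarrow> lead_coeff g = 1"
  by (metis bit_not_zero_iff leading_coeff_neq_0)

lemma phi_top: "g \<noteq> 0 \<Longrightarrow> phi g (degree g) c = 1"
  unfolding phi_def using Gm_top[of c g] lc1[of g] by simp

lemma Gm_shift: "Gm (poly_shift e q) = poly_shift e (Gm q)"
  by (rule poly_eqI) (simp add: coeff_Gm coeff_poly_shift)

lemma shift_shift1: "poly_shift (Suc 0) (poly_shift e q) = poly_shift (Suc e) q"
  by (rule poly_eqI) (simp add: coeff_poly_shift)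

lemma Tp_shift:
  "Tp (poly_shift e ((Gm ^^ s) g)) =
     (if phi g e s = 1 then poly_shift e ((Gm ^^ Suc s) g) else poly_shift (Suc e) ((Gm ^^ s) g))"
proof -
  have c0: "coeff (poly_shift e ((Gm ^^ s) g)) 0 = phi g e s"
    unfolding phi_def by (simp add: coeff_poly_shift)
  show ?thesis
  proof (cases "phi g e s = 1")
    case True
    thus ?thesis unfolding Tp_def using c0 by (simp add: Gm_shift)
  next
    case False
    hence "phi g e s = 0" by simp
    thus ?thesis unfolding Tp_def using c0 by (simp add: shift_shift1)
  qed
qed

lemma tri:
  fixes \<phi> :: "nat \<Rightarrow> nat \<Rightarrow> bit"
  assumes rec: "\<And>r c. \<phi> (Suc r) c = \<phi> r c + \<phi> r (Suc c)"
    and ones: "\<And>j. j < k \<Longrightarrow> \<phi> e (a + j) = 1"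
  shows "1 \<le> i \<Longrightarrow> j + i < k \<Longrightarrow> \<phi> (e + i) (a + j) = 0"
proof (induction i arbitrary: j)
  case 0
  thus ?case by simp
next
  case (Suc i)
  show ?case
  proof (cases "i = 0")
    case True
    have "\<phi> (Suc e) (a + j) = \<phi> e (a + j) + \<phi> e (a + Suc j)"
      using rec[of e "a + j"] by simp
    also have "\<dots> = 1 + 1" using ones[of j] ones[of "Suc j"] Suc.prems True by simp
    finally show ?thesis using True by simp
  next
    case False
    have "\<phi> (e + Suc i) (a + j) = \<phi> (e + i) (a + j) + \<phi> (e + i) (a + Suc j)"
      using rec[of "e + i" "a + j"] by simp
    also have "\<phi> (e + i) (a + j) = 0" using Suc.IH[of j] Suc.prems False by simp
    also have "\<phi> (e + i) (a + Suc j) = 0" using Suc.IH[of "Suc j"] Suc.prems False by simp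
    finally show ?thesis by simp
  qed
qed

definition run :: "bit poly \<Rightarrow> nat \<Rightarrow> nat \<Rightarrow> nat" where
  "run g e a = (LEAST k. phi g e (a + k) = 0)"

fun sig :: "bit poly \<Rightarrow> nat \<Rightarrow> nat" where
  "sig g 0 = 0"
| "sig g (Suc e) = sig g e + run g e (sig g e)"

lemma run_exists:
  assumes "g \<noteq> 0" "e < degree g"
  shows "\<exists>k \<le> degree g - e. phi g e (a + k) = 0"
proof (rule ccontr)
  assume "\<not> ?thesis"
  hence ones: "\<And>j. j < degree g - e + 1 \<Longrightarrow> phi g e (a + j) = 1" by auto
  have "phi g (e + (degree g - e)) (a + 0) = 0"
    by (rule tri[of "phi g", OF phi_rec2 ones]) (use assms in auto)
  thus False using phi_top[OF assms(1), of a] assms(2) by simp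
qed

lemma run_zero:
  assumes "g \<noteq> 0" "e < degree g"
  shows "phi g e (a + run g e a) = 0"
  unfolding run_def using run_exists[OF assms, of a] by (auto intro: LeastI_ex)

lemma run_le:
  assumes "g \<noteq> 0" "e < degree g"
  shows "run g e a \<le> degree g - e"
proof -
  obtain k where "k \<le> degree g - e" "phi g e (a + k) = 0" using run_exists[OF assms] by blast
  thus ?thesis unfolding run_def by (meson Least_le le_trans)
qed

lemma run_ones: "j < run g e a \<Longrightarrow> phi g e (a + j) = 1"
  unfolding run_def using not_less_Least by fastforce

lemma state:
  assumes g: "g \<noteq> 0"
  shows "e \<le> degree g \<Longrightarrow> (Tp ^^ (sig g e + e)) g = poly_shift e ((Gm ^^ sig g e) g)"
proof (induction e)
  case 0
  thus ?case by (simp add: poly_shift_id)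
next
  case (Suc e)
  hence e: "e < degree g" by simp
  let ?a = "sig g e" and ?k = "run g e (sig g e)"
  have inner: "i \<le> ?k \<Longrightarrow> (Tp ^^ (?a + e + i)) g = poly_shift e ((Gm ^^ (?a + i)) g)" for i
  proof (induction i)
    case 0
    thus ?case using Suc.IH e by simp
  next
    case (Suc i)
    have "(Tp ^^ (?a + e + Suc i)) g = Tp ((Tp ^^ (?a + e + i)) g)" by simp
    also have "\<dots> = Tp (poly_shift e ((Gm ^^ (?a + i)) g))" using Suc by simp
    also have "\<dots> = poly_shift e ((Gm ^^ Suc (?a + i)) g)"
      using run_ones[of i g e ?a] Suc.prems by (simp add: Tp_shift)
    finally show ?case by simp
  qed
  have "(Tp ^^ (sig g (Suc e) + Suc e)) g = (Tp ^^ Suc (?a + e + ?k)) g"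
    by (rule arg_cong[where f="\<lambda>n. (Tp ^^ n) g"]) simp
  also have "\<dots> = Tp ((Tp ^^ (?a + e + ?k)) g)" by simp
  also have "\<dots> = Tp (poly_shift e ((Gm ^^ (?a + ?k)) g))" using inner by simp
  also have "\<dots> = poly_shift (Suc e) ((Gm ^^ (?a + ?k)) g)"
    using run_zero[OF g e, of ?a] by (simp add: Tp_shift)
  finally show ?case by simp
qed

lemma shift_top: "g \<noteq> 0 \<Longrightarrow> poly_shift (degree g) ((Gm ^^ s) g) = 1"
  by (rule poly_eqI)
     (auto simp: coeff_poly_shift Gm_high Gm_top lc1)

lemma reach: "g \<noteq> 0 \<Longrightarrow> (Tp ^^ (sig g (degree g) + degree g)) g = 1"
  using state[of g "degree g"] shift_top by simp

lemma tau_le: "f \<noteq> 0 \<Longrightarrow> tau f \<le> sig (sg f) (degree f) + degree f"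
proof -
  assume f: "f \<noteq> 0"
  have "sg f \<noteq> 0" using f sg_inj[of f 0] sg_def by fastforce
  hence "(Tp ^^ (sig (sg f) (degree f) + degree f)) (sg f) = 1" using reach by fastforce
  hence "(T_map ^^ (sig (sg f) (degree f) + degree f)) f = 1" using T_iff by simp
  thus ?thesis unfolding tau_def by (rule Least_le)
qed



lemma Gm_pow: "(Gm ^^ s) h = poly_shift s ([:1,1:] ^ s * h)"
proof (induction s)
  case 0
  thus ?case by (simp add: poly_shift_id)
next
  case (Suc s)
  show ?case
  proof (rule poly_eqI)
    fix i
    have "coeff ((Gm ^^ Suc s) h) i = coeff ((Gm ^^ s) h) i + coeff ((Gm ^^ s) h) (Suc i)"
      by (simp only: funpow.simps comp_apply coeff_Gm)
    also have "\<dots> = coeff ([:1,1:] ^ s * h) (i + s) + coeff ([:1,1:] ^ s * h) (Suc (i + s))"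
      using Suc.IH by (simp add: coeff_poly_shift)
    also have "\<dots> = coeff ([:1,1:] * ([:1,1:] ^ s * h)) (Suc (i + s))"
      by (simp only: coeff_11_mult add.commute)
    also have "\<dots> = coeff (poly_shift (Suc s) ([:1,1:] ^ Suc s * h)) i"
      by (simp only: coeff_poly_shift power_Suc mult.assoc add_Suc_right)
    finally show "coeff ((Gm ^^ Suc s) h) i = coeff (poly_shift (Suc s) ([:1,1:] ^ Suc s * h)) i" .
  qed
qed

lemma frob: "([:1,1:] :: bit poly) ^ (2 ^ t) = 1 + monom 1 (2 ^ t)"
proof (induction t)
  case 0
  thus ?case by (simp add: monom_Suc one_pCons)
next
  case (Suc t)
  let ?m = "monom (1::bit) (2 ^ t)"
  have "([:1,1:] :: bit poly) ^ (2 ^ Suc t) = ([:1,1:] ^ (2 ^ t)) * ([:1,1:] ^ (2 ^ t))"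
    by (simp add: power_add[symmetric] mult_2)
  also have "\<dots> = (1 + ?m) * (1 + ?m)" using Suc.IH by simp
  also have "\<dots> = 1 + (?m + ?m) + ?m * ?m"
    by (simp only: distrib_left distrib_right mult_1_left mult_1_right add.assoc)
  also have "?m + ?m = 0" by (rule bitpoly_add_self)
  also have "?m * ?m = monom 1 (2 ^ Suc t)" by (simp add: mult_monom mult_2)
  finally show ?case by (simp only: add_0_right)
qed


lemma period:
  assumes "degree g < 2 ^ t"
  shows "(Gm ^^ (2 ^ t)) g = g"
proof (rule poly_eqI)
  fix i
  let ?P = "2 ^ t :: nat"
  have "coeff ((Gm ^^ ?P) g) i = coeff ((1 + monom 1 ?P) * g) (i + ?P)"
    by (simp only: Gm_pow frob coeff_poly_shift)
  also have "\<dots> = coeff g (i + ?P) + coeff (monom 1 ?P * g) (i + ?P)"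
    by (simp only: distrib_right mult_1_left coeff_add)
  also have "coeff (monom 1 ?P * g) (i + ?P) = coeff g i"
    by (simp add: coeff_monom_mult)
  also have "coeff g (i + ?P) = 0" using assms by (intro coeff_eq_0) simp
  finally show "coeff ((Gm ^^ ?P) g) i = coeff g i" by (simp only: add_0_left)
qed

lemma phi_per:
  assumes "degree g < 2 ^ t"
  shows "phi g e (c + 2 ^ t) = phi g e c"
proof -
  have "phi g e (c + 2 ^ t) = coeff ((Gm ^^ c) ((Gm ^^ (2 ^ t)) g)) e"
    by (simp only: phi_def funpow_add comp_apply)
  thus ?thesis by (simp only: period[OF assms] phi_def)
qed

lemma phi_mod:
  assumes "degree g < 2 ^ t"
  shows "phi g e (c mod 2 ^ t) = phi g e c"
proof -
  have "phi g e (r + 2 ^ t * q) = phi g e r" for r q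
  proof (induction q)
    case 0
    thus ?case by simp
  next
    case (Suc q)
    have "r + 2 ^ t * Suc q = (r + 2 ^ t * q) + 2 ^ t" by simp
    hence "phi g e (r + 2 ^ t * Suc q) = phi g e (r + 2 ^ t * q)"
      by (simp only: phi_per[OF assms])
    thus ?case using Suc.IH by (simp only:)
  qed
  from this[of "c mod 2 ^ t" "c div 2 ^ t"] show ?thesis by simp
qed



lemma sum_tri: "2 * (\<Sum>i<k. k - i) = k * (k + 1)" for k :: nat
proof (induction k)
  case 0
  thus ?case by simp
next
  case (Suc k)
  have "(\<Sum>i<Suc k. Suc k - i) = (\<Sum>i<k. Suc (k - i)) + 1"
    by (simp add: Suc_diff_le)
  also have "\<dots> = (\<Sum>i<k. k - i) + k + 1" by (simp only: Suc_eq_plus1 sum.distrib) simp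
  finally show ?case using Suc.IH by (simp add: algebra_simps)
qed

lemma tri_card: "2 * card {(i, j). i + j < (k::nat)} = k * (k + 1)"
proof -
  have "{(i, j). i + j < k} = (SIGMA i:{..<k}. {..<k - i})" by auto
  hence "card {(i, j). i + j < k} = (\<Sum>i<k. card {..<k - i})"
    by (simp add: card_SigmaI)
  thus ?thesis using sum_tri[of k] by simp
qed

lemma area:
  fixes \<phi> :: "nat \<Rightarrow> nat \<Rightarrow> bit" and a k :: "nat \<Rightarrow> nat" and d P :: nat
  assumes rec: "\<And>r c. \<phi> (Suc r) c = \<phi> r c + \<phi> r (Suc c)"
    and top: "\<And>c. \<phi> d c = 1"
    and per: "\<And>r c. \<phi> r (c mod P) = \<phi> r c"
    and dP: "d < P"
    and ones: "\<And>e j. e < d \<Longrightarrow> j < k e \<Longrightarrow> \<phi> e (a e + j) = 1"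
  shows "(\<Sum>e<d. k e * (k e + 1)) \<le> 2 * (P * d)"
proof -
  have tri': "\<phi> (e + i) (a e + j) = 0" if "e < d" "1 \<le> i" "j + i < k e" for e i j
    using tri[of \<phi> "k e" e "a e", OF rec ones[OF \<open>e < d\<close>]] that by blast
  have kb: "k e \<le> d - e" if "e < d" for e
  proof (rule ccontr)
    assume "\<not> k e \<le> d - e"
    hence "\<phi> (e + (d - e)) (a e + 0) = 0" using tri'[of e "d - e" 0] that by simp
    thus False using top[of "a e"] that by simp
  qed
  define W where "W e = (\<lambda>(i, j). ((a e + i) mod P, e + j)) ` {(i, j). i + j < k e}" for e
  have fin: "finite {(i, j). i + j < (m::nat)}" for m
    by (rule finite_subset[of _ "{..<m} \<times> {..<m}"]) auto
  have inj: "inj_on (\<lambda>(i, j). ((a e + i) mod P, e + j)) {(i, j). i + j < k e}" if "e < d" for e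
  proof (rule inj_onI, clarsimp)
    fix i j i' j'
    assume h: "i + j < k e" "i' + j' < k e" "(a e + i) mod P = (a e + i') mod P"
    have "i < P" "i' < P" using h kb[OF that] dP by linarith+
    show "i = i'"
    proof (cases "i \<le> i'")
      case True
      hence "P dvd (a e + i') - (a e + i)" using h(3) mod_eq_dvd_iff_nat[of "a e + i" "a e + i'" P] by simp
      hence "P dvd i' - i" by simp
      moreover have "i' - i < P" using \<open>i' < P\<close> by simp
      ultimately have "i' - i = 0" using dvd_imp_le by fastforce
      thus ?thesis using True by simp
    next
      case False
      hence "P dvd (a e + i) - (a e + i')" using h(3) mod_eq_dvd_iff_nat[of "a e + i'" "a e + i" P] by simp
      hence "P dvd i - i'" by simp
      moreover have "i - i' < P" using \<open>i < P\<close> by simp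
      ultimately have "i - i' = 0" using dvd_imp_le by fastforce
      thus ?thesis using False by simp
    qed
  qed
  have cardW: "2 * card (W e) = k e * (k e + 1)" if "e < d" for e
    unfolding W_def using card_image[OF inj[OF that]] tri_card[of "k e"] by simp
  have sub: "W e \<subseteq> {..<P} \<times> {..<d}" if "e < d" for e
  proof
    fix x assume "x \<in> W e"
    then obtain i j where x: "x = ((a e + i) mod P, e + j)" "i + j < k e" unfolding W_def by auto
    have "(a e + i) mod P < P" using dP by simp
    moreover have "e + j < d" using x(2) kb[OF that] that by linarith
    ultimately show "x \<in> {..<P} \<times> {..<d}" using x by simp
  qed
  have disj1: "W e \<inter> W e' = {}" if "e < e'" "e' < d" for e e'
  proof (rule ccontr)
    assume "W e \<inter> W e' \<noteq> {}"
    then obtain i j i' j' where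
      h: "i + j < k e" "i' + j' < k e'" "(a e + i) mod P = (a e' + i') mod P" "e + j = e' + j'"
      unfolding W_def by auto
    define m where "m = e' - e"
    have m1: "1 \<le> m" and em: "e + m = e'" using that unfolding m_def by auto
    have "i + m < k e" using h(1) h(4) em by linarith
    hence z: "\<phi> e' (a e + i) = 0" using tri'[of e m i] m1 em that by simp
    have o: "\<phi> e' (a e' + i') = 1" using ones[of e' i'] h(2) that by simp
    have "\<phi> e' (a e + i) = \<phi> e' (a e' + i')"
      using per[of e' "a e + i"] per[of e' "a e' + i'"] h(3) by simp
    thus False using z o by simp
  qed
  have disj: "W e \<inter> W e' = {}" if "e \<in> {..<d}" "e' \<in> {..<d}" "e \<noteq> e'" for e e'
  proof (cases "e < e'")
    case True thus ?thesis using disj1 that by simp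
  next
    case False hence "e' < e" using that by simp
    thus ?thesis using disj1[of e' e] that by blast
  qed
  have finW: "finite (W e)" for e unfolding W_def using fin by simp
  have "card (\<Union>e<d. W e) = (\<Sum>e<d. card (W e))"
    by (rule card_UN_disjoint) (use finW disj in auto)
  moreover have "card (\<Union>e<d. W e) \<le> card ({..<P} \<times> {..<d})"
    by (rule card_mono) (use sub in auto)
  ultimately have "(\<Sum>e<d. card (W e)) \<le> P * d" by (simp add: card_cartesian_product)
  hence "2 * (\<Sum>e<d. card (W e)) \<le> 2 * (P * d)" by simp
  moreover have "2 * (\<Sum>e<d. card (W e)) = (\<Sum>e<d. k e * (k e + 1))"
    by (simp add: sum_distrib_left cardW)
  ultimately show ?thesis by simp
qed



lemma powr15: "0 \<le> (x::real) \<Longrightarrow> x powr 1.5 = x * sqrt x"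
proof (cases "x = 0")
  case True thus ?thesis by simp
next
  case False
  assume "0 \<le> x"
  hence x: "0 < x" using False by simp
  have "x powr 1.5 = x powr (1 + 1/2)" by simp
  also have "\<dots> = x powr 1 * x powr (1/2)" by (rule powr_add)
  also have "\<dots> = x * sqrt x" using x by (simp add: powr_half_sqrt)
  finally show ?thesis .
qed

lemma H_id:
  fixes s t a :: real
  assumes "a = 2 * s + t"
  shows "6 * a * (2 * s^3 + 1 - s^2) - a * (a - 1) * (3 * s^2 + 2 - a) - 12 * s^4
       = (2*s^3 - 6*s^2 + 10*s) + 3*(t-1)*(2-t)*s^2 + 6*(t-1)^2*s + t*(t^2 - 3*t + 8)"
  unfolding assms by (simp add: algebra_simps power2_eq_square power3_eq_cube power4_eq_xxxx)

lemma H_nonneg: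
  fixes s t :: real
  assumes s: "0 \<le> s" and t: "1 \<le> t" "t \<le> 2"
  shows "0 \<le> (2*s^3 - 6*s^2 + 10*s) + 3*(t-1)*(2-t)*s^2 + 6*(t-1)^2*s + t*(t^2 - 3*t + 8)"
proof -
  have a: "0 \<le> 2*s^3 - 6*s^2 + 10*s"
  proof -
    have "2*s^3 - 6*s^2 + 10*s = 2*s*((s - 3/2)^2 + 11/4)"
      by (simp add: algebra_simps power2_eq_square power3_eq_cube)
    also have "0 \<le> \<dots>" using s by (intro mult_nonneg_nonneg) auto
    finally show ?thesis .
  qed
  have b: "0 \<le> 3*(t-1)*(2-t)*s^2" using t by (intro mult_nonneg_nonneg) auto
  have c: "0 \<le> 6*(t-1)^2*s" using s by (intro mult_nonneg_nonneg) auto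
  have d: "0 \<le> t*(t^2 - 3*t + 8)"
  proof -
    have "t^2 - 3*t + 8 = (t - 3/2)^2 + 23/4" by (simp add: algebra_simps power2_eq_square)
    hence "0 \<le> t^2 - 3*t + 8" by (metis add_nonneg_nonneg zero_le_power2 divide_nonneg_nonneg
        zero_le_numeral)
    thus ?thesis using t by simp
  qed
  show ?thesis using a b c d by linarith
qed

definition Wf :: "nat \<Rightarrow> nat \<Rightarrow> int" where
  "Wf a l = (if l < a then 2 * int a * int l - int l * (int l + 1) else int a * (int a - 1))"

lemma W_row:
  fixes a k l :: nat
  assumes "k \<le> l"
  shows "2 * int a * int k - int k * (int k + 1) \<le> Wf a l"
proof (cases "l < a")
  case True
  have "Wf a l - (2 * int a * int k - int k * (int k + 1))
        = (int l - int k) * (2 * int a - int l - int k - 1)"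
    using True unfolding Wf_def by (simp add: algebra_simps)
  moreover have "0 \<le> (int l - int k) * (2 * int a - int l - int k - 1)"
    using True assms by (intro mult_nonneg_nonneg) auto
  ultimately show ?thesis by linarith
next
  case False
  have "Wf a l - (2 * int a * int k - int k * (int k + 1))
        = (int k - int a) * (int k - int a + 1)"
    using False unfolding Wf_def by (simp add: algebra_simps)
  moreover have "0 \<le> (int k - int a) * (int k - int a + 1)"
  proof (cases "a \<le> k")
    case True thus ?thesis by (intro mult_nonneg_nonneg) auto
  next
    case False thus ?thesis by (intro mult_nonpos_nonpos) auto
  qed
  ultimately show ?thesis by linarith
qed

lemma SW_low:
  "n + 1 \<le> a \<Longrightarrow> 3 * (\<Sum>l<n. Wf a (l + 1)) = int n * (int n + 1) * (3 * int a - int n - 2)"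
proof (induction n)
  case 0 thus ?case by simp
next
  case (Suc n)
  have w: "Wf a (n + 1) = 2 * int a * (int n + 1) - (int n + 1) * (int n + 2)"
    using Suc.prems unfolding Wf_def by (simp add: algebra_simps)
  have "3 * (\<Sum>l<Suc n. Wf a (l + 1)) = 3 * (\<Sum>l<n. Wf a (l + 1)) + 3 * Wf a (n + 1)"
    by (simp add: algebra_simps)
  also have "\<dots> = int n * (int n + 1) * (3 * int a - int n - 2) + 3 * Wf a (n + 1)"
    using Suc by simp
  finally show ?case unfolding w by (simp add: algebra_simps)
qed

lemma SW_high:
  assumes "1 \<le> a" "a \<le> n + 1"
  shows "3 * (\<Sum>l<n. Wf a (l + 1)) = int a * (int a - 1) * (3 * int n + 2 - int a)"
proof -
  have "3 * (\<Sum>l<a - 1 + j. Wf a (l + 1)) = int a * (int a - 1) * (3 * int (a - 1 + j) + 2 - int a)" for j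
  proof (induction j)
    case 0
    have "3 * (\<Sum>l<a - 1. Wf a (l + 1)) = int (a - 1) * (int (a - 1) + 1) * (3 * int a - int (a - 1) - 2)"
      by (rule SW_low) (use assms in simp)
    thus ?case using assms by (simp add: of_nat_diff algebra_simps)
  next
    case (Suc j)
    have w: "Wf a (a - 1 + j + 1) = int a * (int a - 1)" using assms(1) unfolding Wf_def by simp
    have "3 * (\<Sum>l<a - 1 + Suc j. Wf a (l + 1)) = 3 * (\<Sum>l<a - 1 + j. Wf a (l + 1)) + 3 * Wf a (a - 1 + j + 1)"
      by (simp add: algebra_simps)
    also have "\<dots> = int a * (int a - 1) * (3 * int (a - 1 + j) + 2 - int a) + 3 * (int a * (int a - 1))"
      using Suc.IH w by simp
    finally show ?case by (simp add: algebra_simps)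
  qed
  from this[of "n - (a - 1)"] show ?thesis using assms by simp
qed

lemma small_cases:
  fixes k :: "nat \<Rightarrow> nat" and d :: nat
  assumes kb: "\<And>e. e < d \<Longrightarrow> k e \<le> d - e" and d4: "d \<le> 4"
  shows "real ((\<Sum>e<d. k e) + d) \<le> 2 * real d powr 1.5 + 1"
proof -
  have A: "(\<Sum>e<d. k e) \<le> (\<Sum>e<d. d - e)" by (rule sum_mono) (simp add: kb)
  have p: "real d powr 1.5 = real d * sqrt (real d)" by (rule powr15) simp
  have "d = 0 \<or> d = 1 \<or> d = 2 \<or> d = 3 \<or> d = 4" using d4 by linarith
  moreover have s2: "1 \<le> sqrt (2::real)" by simp
  moreover have s3: "4/3 \<le> sqrt (3::real)" by (rule real_le_rsqrt) (simp add: power2_eq_square)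
  moreover have s4: "sqrt (4::real) = 2" by (simp add: real_sqrt_unique)
  ultimately show ?thesis
  proof (elim disjE)
    assume "d = 0" thus ?thesis by simp
  next
    assume d: "d = 1"
    have "(\<Sum>e<d. k e) \<le> 1" using A d by simp
    thus ?thesis using p d by simp
  next
    assume d: "d = 2"
    have "(\<Sum>e<d. k e) \<le> 3" using A d by (simp add: numeral_eq_Suc lessThan_Suc)
    hence n: "(\<Sum>e<d. k e) + d \<le> 5" using d by simp
    have "real ((\<Sum>e<d. k e) + d) \<le> 5" using of_nat_mono[OF n] by simp
    also have "5 \<le> 2 * real d powr 1.5 + 1" using p d s2 by simp
    finally show ?thesis .
  next
    assume d: "d = 3"
    have "(\<Sum>e<d. k e) \<le> 6" using A d by (simp add: numeral_eq_Suc lessThan_Suc)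
    hence n: "(\<Sum>e<d. k e) + d \<le> 9" using d by simp
    have "real ((\<Sum>e<d. k e) + d) \<le> 9" using of_nat_mono[OF n] by simp
    also have "9 \<le> 2 * real d powr 1.5 + 1" using p d s3 by simp
    finally show ?thesis .
  next
    assume d: "d = 4"
    have "(\<Sum>e<d. k e) \<le> 10" using A d by (simp add: numeral_eq_Suc lessThan_Suc)
    hence n: "(\<Sum>e<d. k e) + d \<le> 14" using d by simp
    have "real ((\<Sum>e<d. k e) + d) \<le> 14" using of_nat_mono[OF n] by simp
    also have "14 \<le> 2 * real d powr 1.5 + 1" using p d s4 by simp
    finally show ?thesis .
  qed
qed

lemma numeric:
  fixes k :: "nat \<Rightarrow> nat" and d :: nat
  assumes kb: "\<And>e. e < d \<Longrightarrow> k e \<le> d - e"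
    and S: "(\<Sum>e<d. k e * (k e + 1)) \<le> 4 * d^2"
  shows "real ((\<Sum>e<d. k e) + d) \<le> 2 * real d powr 1.5 + 1"
proof (cases "d \<le> 4")
  case True thus ?thesis using small_cases kb by blast
next
  case False
  hence d5: "5 \<le> d" by simp
  define s where "s = sqrt (real d)"
  define a where "a = nat \<lfloor>2 * s\<rfloor> + 2"
  have s0: "0 \<le> s" unfolding s_def by simp
  have ss: "s^2 = real d" unfolding s_def by simp
  have fl0: "0 \<le> \<lfloor>2 * s\<rfloor>" using s0 by simp
  have ra: "real a = real_of_int \<lfloor>2 * s\<rfloor> + 2" unfolding a_def using fl0 by simp
  have t1: "1 \<le> real a - 2 * s" using ra by linarith
  have t2: "real a - 2 * s \<le> 2" using ra by linarith
  have "s < real d / 2"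
  proof -
    have "real d < (real d / 2)^2" using d5 by (simp add: power2_eq_square field_simps)
    hence "sqrt (real d) < sqrt ((real d / 2)^2)" by (rule real_sqrt_less_mono)
    thus ?thesis unfolding s_def by simp
  qed
  hence "\<lfloor>2 * s\<rfloor> < int d" by linarith
  hence "nat \<lfloor>2 * s\<rfloor> < d" using fl0 by (simp add: nat_less_iff)
  hence aD: "a \<le> d + 1" unfolding a_def by linarith
  have a1: "1 \<le> a" unfolding a_def by simp
  have rows: "(\<Sum>e<d. 2 * int a * int (k e) - int (k e) * (int (k e) + 1)) \<le> (\<Sum>e<d. Wf a (d - e))"
    by (rule sum_mono) (rule W_row, simp add: kb)
  have reidx: "(\<Sum>e<d. Wf a (d - e)) = (\<Sum>l<d. Wf a (l + 1))"
  proof -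
    have "(\<Sum>e<d. Wf a (d - e)) = (\<Sum>e<d. (\<lambda>l. Wf a (l + 1)) (d - Suc e))"
      by (rule sum.cong) (auto simp: Suc_diff_Suc)
    also have "\<dots> = (\<Sum>l<d. Wf a (l + 1))" by (rule sum.nat_diff_reindex)
    finally show ?thesis .
  qed
  have SW: "3 * (\<Sum>e<d. Wf a (d - e)) = int a * (int a - 1) * (3 * int d + 2 - int a)"
    unfolding reidx by (rule SW_high[OF a1 aD])
  define A where "A = (\<Sum>e<d. k e)"
  have lhs: "(\<Sum>e<d. 2 * int a * int (k e) - int (k e) * (int (k e) + 1))
           = 2 * int a * int A - int (\<Sum>e<d. k e * (k e + 1))"
    unfolding A_def by (simp add: sum_subtractf sum_distrib_left algebra_simps)
  have "6 * int a * int A \<le> int a * (int a - 1) * (3 * int d + 2 - int a) + 3 * int (\<Sum>e<d. k e * (k e + 1))"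
    using rows lhs SW by linarith
  also have "int (\<Sum>e<d. k e * (k e + 1)) \<le> 4 * int d ^ 2"
  proof -
    have "int (\<Sum>e<d. k e * (k e + 1)) \<le> int (4 * d ^ 2)" using S by (simp only: of_nat_le_iff)
    thus ?thesis by simp
  qed
  finally have key: "6 * int a * int A \<le> int a * (int a - 1) * (3 * int d + 2 - int a) + 12 * int d ^ 2"
    by linarith
  hence keyr: "6 * real a * real A \<le> real a * (real a - 1) * (3 * real d + 2 - real a) + 12 * real d ^ 2"
  proof -
    have "(of_int (6 * int a * int A) :: real)
        \<le> of_int (int a * (int a - 1) * (3 * int d + 2 - int a) + 12 * int d ^ 2)"
      using key by (simp only: of_int_le_iff)
    thus ?thesis by simp
  qed
  have H: "0 \<le> 6 * real a * (2 * s^3 + 1 - s^2) - real a * (real a - 1) * (3 * s^2 + 2 - real a) - 12 * s^4"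
    using H_id[of "real a" s "real a - 2 * s"] H_nonneg[OF s0 t1 t2] by simp
  have s4: "s^4 = real d ^ 2"
  proof -
    have "s^4 = (s^2)^2" by (simp only: power_mult[symmetric]) simp
    thus ?thesis using ss by simp
  qed
  have "6 * real a * real A \<le> 6 * real a * (2 * s^3 + 1 - real d)"
    using keyr H ss s4 by simp
  hence "real A \<le> 2 * s^3 + 1 - real d" using a1 by simp
  moreover have "real d powr 1.5 = s^3"
    using powr15[of "real d"] ss unfolding s_def by (simp add: power3_eq_cube power2_eq_square)
  ultimately show ?thesis unfolding A_def by simp
qed


theorem theorem3p5:
  fixes f :: "bit poly"
  assumes "f \<noteq> 0"
  shows "real (tau f) \<le> 2 * real (degree f) powr 1.5 + 1"
proof -
  define g where "g = sg f"
  define d where "d = degree f"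
  have g0: "g \<noteq> 0"
  proof
    assume "g = 0"
    hence "sg f = sg 0" unfolding g_def sg_def by simp
    thus False using sg_inj assms by blast
  qed
  have dg: "degree g = d" by (simp add: g_def d_def)
  define k where "k e = run g e (sig g e)" for e
  have sigsum: "sig g n = (\<Sum>e<n. k e)" for n by (induction n) (simp_all add: k_def)
  have tau1: "tau f \<le> (\<Sum>e<d. k e) + d"
    using tau_le[OF assms] sigsum unfolding g_def d_def by simp
  have kb: "\<And>e. e < d \<Longrightarrow> k e \<le> d - e" using run_le[OF g0] dg unfolding k_def by simp
  have S: "(\<Sum>e<d. k e * (k e + 1)) \<le> 4 * d ^ 2"
  proof (cases "d = 0")
    case True thus ?thesis by simp
  next
    case False
    define t where "t = (LEAST t. d < 2 ^ t)"
    have ex: "d < 2 ^ d" by (rule less_exp)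
    have t1: "d < 2 ^ t" unfolding t_def using ex by (rule LeastI)
    have "t \<noteq> 0" using t1 False by (intro notI) simp
    hence "\<not> d < 2 ^ (t - 1)" unfolding t_def by (intro not_less_Least) (simp add: t_def[symmetric])
    hence "2 ^ (t - 1) \<le> d" by simp
    moreover have "(2::nat) ^ t = 2 * 2 ^ (t - 1)" using \<open>t \<noteq> 0\<close> by (cases t) simp_all
    ultimately have t2: "2 ^ t \<le> 2 * d" by simp
    have "(\<Sum>e<d. k e * (k e + 1)) \<le> 2 * (2 ^ t * d)"
    proof (rule area[of "phi g" d "2 ^ t" k "\<lambda>e. sig g e"])
      show "\<And>r c. phi g (Suc r) c = phi g r c + phi g r (Suc c)" by (rule phi_rec2)
      show "\<And>c. phi g d c = 1" using phi_top[OF g0] dg by simp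
      show "\<And>r c. phi g r (c mod 2 ^ t) = phi g r c" using phi_mod t1 dg by simp
      show "d < 2 ^ t" by (rule t1)
      show "\<And>e j. e < d \<Longrightarrow> j < k e \<Longrightarrow> phi g e (sig g e + j) = 1"
        unfolding k_def by (rule run_ones)
    qed
    also have "\<dots> \<le> 2 * (2 * d * d)" using t2 by simp
    finally show ?thesis by (simp add: power2_eq_square)
  qed
  have "real ((\<Sum>e<d. k e) + d) \<le> 2 * real d powr 1.5 + 1" by (rule numeric[OF kb S])
  moreover have "real (tau f) \<le> real ((\<Sum>e<d. k e) + d)" using tau1 by (rule of_nat_mono)
  ultimately show ?thesis unfolding d_def by linarith
qed

end
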